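(* Let $d$ be an odd prime and $n\ge 2$. Let $\bar X_1,\bar Z_1,\dots,\bar X_n,\bar Z_n\in\mathcal{P}_d^n$ be such that the association $X_i\mapsto\bar X_i$, $Z_i\mapsto\bar Z_i$ ($i=1,\dots,n$) is commutation relation preserving, and suppose $\bar X_1=X\otimes P'$ and $\bar Z_1=Z\otimes Q'$ for some $P',Q'\in\mathcal{P}_d^{n-1}$. Then there exists a circuit $U$ built from the gates $C_X$, $F$, $S$ such that $UX_1U^{-1}=\lambda\, X\otimes P'$ and $UZ_1U^{-1}=\mu\, Z\otimes Q'$ for some complex scalars $\lambda,\mu$.
   Context: $\omega=e^{2\pi i/d}$; $X|j\rangle=|j+1\bmod d\rangle$, $Z|j\rangle=\omega^j|j\rangle$, $F|j\rangle=\frac1{\sqrt d}\sum_m\omega^{jm}|m\rangle$, $S|j\rangle=\omega^{j(j+1)/2}|j\rangle$, $C_X|j\rangle|k\rangle=|j\rangle|j+k\bmod d\rangle$. $X_i,Z_i$ denote $X,Z$ acting on qudit $i$ (identity elsewhere). $\mathcal{P}_d^n$ is the group of operators $\omega^kZ_1^{a_1}X_1^{b_1}\cdots Z_n^{a_n}X_n^{b_n}$. For $P=\omega^kZ_1^{a_1}X_1^{b_1}\cdots Z_n^{a_n}X_n^{b_n}$, $Q=\omega^lZ_1^{c_1}X_1^{e_1}\cdots Z_n^{c_n}X_n^{e_n}$ define $(P,Q)=\sum_i(a_ie_i-b_ic_i)\in\mathbb{Z}_d$ (so $PQ=\omega^{(P,Q)}QP$). An association $P_i\mapsto\bar P_i$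 between equal-size indexed families in $\mathcal{P}_d^n$ is commutation relation preserving if $(P_i,P_j)=(\bar P_i,\bar P_j)$ for all $i,j$. A circuit built from a gate set is a finite product of gates from the set, one-qudit gates on any qudit, two-qudit gates on any ordered pair of distinct qudits. *)

theory Defs
  imports Complex_Main "HOL-Computational_Algebra.Primes"
begin

text \<open>Operators on n qudits of dimension d, represented as matrices indexed by
  computational basis states. A basis state is a function j from qudit indices
  to {0..d-1}; qudits are numbered 0..n-1 (qudit 1 of the paper is index 0).
  All matrices are zero outside the basis, so plain equality is operator equality.\<close>

type_synonym op = "(nat \<Rightarrow> nat) \<Rightarrow> (nat \<Rightarrow> nat) \<Rightarrow> complex"

definition basis :: "nat \<Rightarrow> nat \<Rightarrow> (nat \<Rightarrow> nat) set" where
  "basis d n = {f. \<forall>i. (i < n \<longrightarrow> f i < d) \<and> (n \<le> i \<longrightarrow> f i = 0)}"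

definition restr :: "nat \<Rightarrow> nat \<Rightarrow> op \<Rightarrow> op" where
  "restr d n M = (\<lambda>x y. if x \<in> basis d n \<and> y \<in> basis d n then M x y else 0)"

definition mmult :: "nat \<Rightarrow> nat \<Rightarrow> op \<Rightarrow> op \<Rightarrow> op" where
  "mmult d n A B = restr d n (\<lambda>x y. \<Sum>z\<in>basis d n. A x z * B z y)"

definition ident :: "nat \<Rightarrow> nat \<Rightarrow> op" where
  "ident d n = restr d n (\<lambda>x y. if x = y then 1 else 0)"

definition scal :: "complex \<Rightarrow> op \<Rightarrow> op" where
  "scal c M = (\<lambda>x y. c * M x y)"

definition wpow :: "nat \<Rightarrow> int \<Rightarrow> complex" where
  "wpow d m = cis (2 * pi * of_int m / of_nat d)"

text \<open>The Pauli operator omega^k Z_1^{a_1} X_1^{b_1} ... Z_n^{a_n} X_n^{b_n};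
  since Z^a X^b |y> = omega^{a(y+b)} |y+b>, its matrix entry <x|.|y> is
  omega^k * prod_i [x_i = y_i + b_i mod d] omega^{a_i x_i}.\<close>
definition pauli :: "nat \<Rightarrow> nat \<Rightarrow> int \<Rightarrow> (nat \<Rightarrow> int) \<Rightarrow> (nat \<Rightarrow> int) \<Rightarrow> op" where
  "pauli d n k a b = restr d n (\<lambda>x y. wpow d k *
     (\<Prod>i<n. if int (x i) = (int (y i) + b i) mod int d then wpow d (a i * int (x i)) else 0))"

definition sform :: "nat \<Rightarrow> nat \<Rightarrow> (nat \<Rightarrow> int) \<Rightarrow> (nat \<Rightarrow> int) \<Rightarrow> (nat \<Rightarrow> int) \<Rightarrow> (nat \<Rightarrow> int) \<Rightarrow> int" where
  "sform d n a b c e = (\<Sum>i<n. a i * e i - b i * c i) mod int d"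

definition unitv :: "nat \<Rightarrow> nat \<Rightarrow> int" where
  "unitv i = (\<lambda>j. if j = i then 1 else 0)"

text \<open>Single-qudit gates as d x d matrices (entry G m j = <m|G|j>).\<close>
definition Fmat :: "nat \<Rightarrow> nat \<Rightarrow> nat \<Rightarrow> complex" where
  "Fmat d m j = wpow d (int j * int m) / complex_of_real (sqrt (real d))"

definition Smat :: "nat \<Rightarrow> nat \<Rightarrow> nat \<Rightarrow> complex" where
  "Smat d m j = (if m = j then wpow d (int j * (int j + 1) div 2) else 0)"

definition one_qudit :: "nat \<Rightarrow> nat \<Rightarrow> (nat \<Rightarrow> nat \<Rightarrow> complex) \<Rightarrow> nat \<Rightarrow> op" where
  "one_qudit d n G i = restr d n (\<lambda>x y.
     if (\<forall>j. j \<noteq> i \<longrightarrow> x j = y j) then G (x i) (y i) else 0)"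

definition cx_gate :: "nat \<Rightarrow> nat \<Rightarrow> nat \<Rightarrow> nat \<Rightarrow> op" where
  "cx_gate d n i j = restr d n (\<lambda>x y.
     if (\<forall>l. l \<noteq> j \<longrightarrow> x l = y l) \<and> x j = (y i + y j) mod d then 1 else 0)"

definition gate :: "nat \<Rightarrow> nat \<Rightarrow> op \<Rightarrow> bool" where
  "gate d n g \<longleftrightarrow>
     (\<exists>i<n. g = one_qudit d n (Fmat d) i \<or> g = one_qudit d n (Smat d) i) \<or>
     (\<exists>i j. i < n \<and> j < n \<and> i \<noteq> j \<and> g = cx_gate d n i j)"

inductive circuit :: "nat \<Rightarrow> nat \<Rightarrow> op \<Rightarrow> bool" for d n where
  circ_id: "circuit d n (ident d n)"
| circ_step: "gate d n g \<Longrightarrow> circuit d n U \<Longrightarrow> circuit d n (mmult d n g U)"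

end

theory Submission
  imports Defs "HOL-Library.FuncSet"
begin
lemma wpow_add: "wpow d (a + b) = wpow d a * wpow d b"
  unfolding wpow_def by (simp add: cis_mult add_divide_distrib distrib_left)

lemma wpow_0[simp]: "wpow d 0 = 1"
  unfolding wpow_def by simp

lemma wpow_dmult: "d > 0 \<Longrightarrow> wpow d (int d * q) = 1"
proof -
  assume "d > 0"
  then have "2 * pi * of_int (int d * q) / of_nat d = 2 * pi * real_of_int q" by simp
  then show ?thesis unfolding wpow_def by simp
qed

lemma wpow_cong_dvd: "d > 0 \<Longrightarrow> int d dvd (m - m') \<Longrightarrow> wpow d m = wpow d m'"
proof -
  assume d: "d > 0" and "int d dvd (m - m')"
  then obtain q where "m = m' + int d * q" by (metis add_diff_cancel_left' add_diff_eq dvd_def)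
  then show ?thesis using wpow_add[of d m' "int d * q"] wpow_dmult[OF d] by simp
qed

lemma wpow_mod: "d > 0 \<Longrightarrow> wpow d (m mod int d) = wpow d m"
  by (rule wpow_cong_dvd) (auto simp: mod_eq_dvd_iff[symmetric])

lemma wpow_sum: "wpow d (\<Sum>i\<in>A. f i) = (\<Prod>i\<in>A. wpow d (f i))"
  by (induction A rule: infinite_finite_induct) (auto simp: wpow_add)

lemma wpow_pow: "wpow d (int t * m) = wpow d m ^ t"
  unfolding wpow_def DeMoivre by (simp add: field_simps)

lemma wpow_ne1: "d > 0 \<Longrightarrow> \<not> int d dvd m \<Longrightarrow> wpow d m \<noteq> 1"
proof
  assume d: "d > 0" and nd: "\<not> int d dvd m" and w: "wpow d m = 1"
  have "cos (2 * pi * of_int m / of_nat d) = 1" using w unfolding wpow_def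
    by (metis cis.sel(1) one_complex.sel(1))
  then obtain k :: int where k: "2 * pi * of_int m / of_nat d = of_int k * 2 * pi"
    using cos_one_2pi_int by blast
  then have "real_of_int m = of_int k * of_nat d" using d by (simp add: field_simps)
  then have "m = k * int d" by (metis of_int_eq_iff of_int_mult of_int_of_nat_eq)
  then show False using nd by simp
qed

lemma charsum: "d > 0 \<Longrightarrow> (\<Sum>t<d. wpow d (int t * m)) = (if int d dvd m then of_nat d else 0)"
proof -
  assume d: "d > 0"
  show ?thesis
  proof (cases "int d dvd m")
    case True
    then have "wpow d m = 1" using wpow_cong_dvd[OF d, of m 0] by simp
    then show ?thesis using True by (simp add: wpow_pow)
  next
    case False
    have "wpow d m ^ d = 1" using wpow_pow[of d d m] wpow_dmult[OF d] by simp
    then show ?thesis using False wpow_ne1[OF d False] by (simp add: wpow_pow sum_gp_strict)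
  qed
qed

lemma basis_finite: "finite (basis d n)"
proof -
  have "basis d n \<subseteq> (\<lambda>g i. if i < n then g i else 0) ` (PiE {..<n} (\<lambda>_. {..<d}))"
  proof
    fix f assume f: "f \<in> basis d n"
    show "f \<in> (\<lambda>g i. if i < n then g i else 0) ` (PiE {..<n} (\<lambda>_. {..<d}))"
      by (rule image_eqI[where x="restrict f {..<n}"]) (use f in \<open>auto simp: basis_def fun_eq_iff PiE_iff\<close>)
  qed
  then show ?thesis by (rule finite_subset) (intro finite_imageI finite_PiE, auto)
qed

lemma restr_in[simp]: "x \<in> basis d n \<Longrightarrow> y \<in> basis d n \<Longrightarrow> restr d n M x y = M x y"
  by (simp add: restr_def)

lemma restr_out1[simp]: "x \<notin> basis d n \<Longrightarrow> restr d n M x y = 0"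
  by (simp add: restr_def)
lemma restr_out2[simp]: "y \<notin> basis d n \<Longrightarrow> restr d n M x y = 0"
  by (simp add: restr_def)

lemma mmult_apply: "x \<in> basis d n \<Longrightarrow> y \<in> basis d n \<Longrightarrow>
   mmult d n A B x y = (\<Sum>z\<in>basis d n. A x z * B z y)"
  by (simp add: mmult_def)

lemma mmult_restr_left[simp]: "mmult d n (restr d n A) B = mmult d n A B"
  unfolding mmult_def by (intro ext) (auto simp: restr_def intro!: sum.cong)

lemma mmult_restr_right[simp]: "mmult d n A (restr d n B) = mmult d n A B"
  unfolding mmult_def by (intro ext) (auto simp: restr_def intro!: sum.cong)

lemma restr_mmult[simp]: "restr d n (mmult d n A B) = mmult d n A B"
  unfolding mmult_def by (intro ext) (auto simp: restr_def)

lemma mmult_assoc: "mmult d n (mmult d n A B) C = mmult d n A (mmult d n B C)"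
proof (intro ext)
  fix x y
  show "mmult d n (mmult d n A B) C x y = mmult d n A (mmult d n B C) x y"
  proof (cases "x \<in> basis d n \<and> y \<in> basis d n")
    case True
    then have "mmult d n (mmult d n A B) C x y = (\<Sum>z\<in>basis d n. (\<Sum>w\<in>basis d n. A x w * B w z) * C z y)"
      by (auto simp: mmult_apply intro!: sum.cong)
    also have "\<dots> = (\<Sum>z\<in>basis d n. \<Sum>w\<in>basis d n. A x w * B w z * C z y)"
      by (simp add: sum_distrib_right)
    also have "\<dots> = (\<Sum>w\<in>basis d n. \<Sum>z\<in>basis d n. A x w * B w z * C z y)"
      by (rule sum.swap)
    also have "\<dots> = (\<Sum>w\<in>basis d n. A x w * (\<Sum>z\<in>basis d n. B w z * C z y))"
      by (simp add: sum_distrib_left mult.assoc)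
    also have "\<dots> = mmult d n A (mmult d n B C) x y"
      using True by (auto simp: mmult_apply intro!: sum.cong)
    finally show ?thesis .
  next
    case False
    then show ?thesis by (auto simp: mmult_def)
  qed
qed

lemma ident_left: "mmult d n (ident d n) M = restr d n M"
proof (intro ext)
  fix x y
  show "mmult d n (ident d n) M x y = restr d n M x y"
  proof (cases "x \<in> basis d n \<and> y \<in> basis d n")
    case True
    then have "mmult d n (ident d n) M x y = (\<Sum>z\<in>basis d n. if z = x then M z y else 0)"
      by (auto simp: mmult_apply ident_def intro!: sum.cong)
    also have "\<dots> = M x y" using True basis_finite by (simp add: sum.delta)
    finally show ?thesis using True by simp
  qed (auto simp: mmult_def)
qed

lemma ident_right: "mmult d n M (ident d n) = restr d n M"
proof (intro ext)
  fix x y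
  show "mmult d n M (ident d n) x y = restr d n M x y"
  proof (cases "x \<in> basis d n \<and> y \<in> basis d n")
    case True
    then have "mmult d n M (ident d n) x y = (\<Sum>z\<in>basis d n. if z = y then M x z else 0)"
      by (auto simp: mmult_apply ident_def intro!: sum.cong)
    also have "\<dots> = M x y" using True basis_finite by (simp add: sum.delta)
    finally show ?thesis using True by simp
  qed (auto simp: mmult_def)
qed

lemma scal_left: "mmult d n (scal c A) B = scal c (mmult d n A B)"
  unfolding mmult_def scal_def restr_def by (auto simp: sum_distrib_left mult.assoc fun_eq_iff)

lemma scal_right: "mmult d n A (scal c B) = scal c (mmult d n A B)"
  unfolding mmult_def scal_def restr_def by (auto simp: sum_distrib_left mult.assoc mult.left_commute fun_eq_iff)

lemma scal_scal: "scal c (scal c' M) = scal (c * c') M"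
  unfolding scal_def by (auto simp: mult.assoc)

lemma restr_scal: "restr d n (scal c M) = scal c (restr d n M)"
  unfolding scal_def restr_def by (auto simp: fun_eq_iff)

lemma restr_pauli[simp]: "restr d n (pauli d n k a b) = pauli d n k a b"
  unfolding pauli_def restr_def by (auto simp: fun_eq_iff)

lemma prod_if: "(\<Prod>i<(n::nat). if P i then (f i :: complex) else 0) = (if \<forall>i<n. P i then \<Prod>i<n. f i else 0)"
  by (induction n) (auto simp: less_Suc_eq)

lemma pauli_alt: "x \<in> basis d n \<Longrightarrow> y \<in> basis d n \<Longrightarrow> pauli d n k a b x y =
  (if \<forall>i<n. int (x i) = (int (y i) + b i) mod int d then wpow d (k + (\<Sum>i<n. a i * int (x i))) else 0)"
proof -
  assume xy: "x \<in> basis d n" "y \<in> basis d n"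
  have "pauli d n k a b x y = wpow d k * (\<Prod>i<n. if int (x i) = (int (y i) + b i) mod int d then wpow d (a i * int (x i)) else 0)"
    using xy by (simp add: pauli_def)
  also have "\<dots> = wpow d k * (if \<forall>i<n. int (x i) = (int (y i) + b i) mod int d then \<Prod>i<n. wpow d (a i * int (x i)) else 0)"
    by (simp only: prod_if)
  also have "\<dots> = (if \<forall>i<n. int (x i) = (int (y i) + b i) mod int d then wpow d (k + (\<Sum>i<n. a i * int (x i))) else 0)"
  proof -
    have gen: "\<And>C. wpow d k * (if C then \<Prod>i<n. wpow d (a i * int (x i)) else 0) = (if C then wpow d (k + (\<Sum>i<n. a i * int (x i))) else 0)"
      by (simp add: wpow_add wpow_sum)
    show ?thesis by (rule gen)
  qed
  finally show ?thesis .
qed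

lemma pauli_phase: "pauli d n k a b = scal (wpow d (k - k')) (pauli d n k' a b)"
  unfolding pauli_def scal_def restr_def
  by (auto simp: fun_eq_iff mult.assoc simp flip: wpow_add)

lemma eq_mod_dvd: "0 < d \<Longrightarrow> 0 \<le> v \<Longrightarrow> v < d \<Longrightarrow> (v = w mod d) \<longleftrightarrow> d dvd (v - (w::int))"
  by (metis mod_eq_dvd_iff mod_pos_pos_trivial)

lemma pauli_cong:
  assumes d: "d > 0" and ha: "\<forall>i<n. a i mod int d = a' i mod int d" and hb: "\<forall>i<n. b i mod int d = b' i mod int d"
  shows "pauli d n k a b = pauli d n k a' b'"
proof (intro ext)
  fix x y
  show "pauli d n k a b x y = pauli d n k a' b' x y"
  proof (cases "x \<in> basis d n \<and> y \<in> basis d n")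
    case True
    have c: "(int (y i) + b i) mod int d = (int (y i) + b' i) mod int d" if "i < n" for i
      by (rule mod_add_cong) (use hb that in auto)
    have H: "(a i * int (x i)) mod int d = (a' i * int (x i)) mod int d" if "i \<in> {..<n}" for i
      by (rule mod_mult_cong) (use ha that in auto)
    have "(\<Sum>i<n. a i * int (x i)) mod int d = (\<Sum>i<n. (a i * int (x i)) mod int d) mod int d"
      by (simp only: mod_sum_eq)
    also have "(\<Sum>i<n. (a i * int (x i)) mod int d) = (\<Sum>i<n. (a' i * int (x i)) mod int d)"
      by (rule sum.cong[OF refl H])
    also have "(\<Sum>i<n. (a' i * int (x i)) mod int d) mod int d = (\<Sum>i<n. a' i * int (x i)) mod int d"
      by (simp only: mod_sum_eq)
    finally have S: "(\<Sum>i<n. a i * int (x i)) mod int d = (\<Sum>i<n. a' i * int (x i)) mod int d" .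
    have "wpow d (k + (\<Sum>i<n. a i * int (x i))) = wpow d ((k + (\<Sum>i<n. a i * int (x i))) mod int d)"
      using d by (simp only: wpow_mod)
    also have "(k + (\<Sum>i<n. a i * int (x i))) mod int d = (k + (\<Sum>i<n. a' i * int (x i))) mod int d"
      by (rule mod_add_cong[OF refl S])
    also have "wpow d ((k + (\<Sum>i<n. a' i * int (x i))) mod int d) = wpow d (k + (\<Sum>i<n. a' i * int (x i)))"
      using d by (simp only: wpow_mod)
    finally have W: "wpow d (k + (\<Sum>i<n. a i * int (x i))) = wpow d (k + (\<Sum>i<n. a' i * int (x i)))" .
    have C: "(\<forall>i<n. int (x i) = (int (y i) + b i) mod int d) = (\<forall>i<n. int (x i) = (int (y i) + b' i) mod int d)"
      using c by auto
    show ?thesis using True by (simp only: pauli_alt C W)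
  qed (auto simp: pauli_def)
qed

lemma upd_basis: "x \<in> basis d n \<Longrightarrow> i < n \<Longrightarrow> t < d \<Longrightarrow> x(i := t) \<in> basis d n"
  by (auto simp: basis_def)

lemma basis_lt: "x \<in> basis d n \<Longrightarrow> i < n \<Longrightarrow> x i < d"
  by (auto simp: basis_def)

lemma sum_site:
  assumes x: "x \<in> basis d n" and i: "i < n"
  shows "(\<Sum>z\<in>basis d n. if (\<forall>j. j \<noteq> i \<longrightarrow> x j = z j) then f z else 0) = (\<Sum>t<d. f (x(i := t)))"
proof -
  define P where "P = (\<lambda>(x::nat\<Rightarrow>nat) (z::nat\<Rightarrow>nat) j. x j = z j)"
  have that: "\<And>z j. P x z j \<longleftrightarrow> x j = z j" by (simp add: P_def)
  have eq: "(\<forall>j. j \<noteq> i \<longrightarrow> x j = z j) \<longleftrightarrow> (\<forall>j. j \<noteq> i \<longrightarrow> P x z j)" for z by (simp add: P_def)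
  have set: "{z \<in> basis d n. \<forall>j. j \<noteq> i \<longrightarrow> P x z j} = (\<lambda>t. x(i := t)) ` {..<d}"
  proof (intro equalityI subsetI)
    fix z assume z: "z \<in> {z \<in> basis d n. \<forall>j. j \<noteq> i \<longrightarrow> P x z j}"
    then have "z = x(i := z i)" using that by (auto simp: fun_eq_iff)
    moreover have "z i < d" using z i by (auto simp: basis_def)
    ultimately show "z \<in> (\<lambda>t. x(i := t)) ` {..<d}" by blast
  next
    fix z assume "z \<in> (\<lambda>t. x(i := t)) ` {..<d}"
    then show "z \<in> {z \<in> basis d n. \<forall>j. j \<noteq> i \<longrightarrow> P x z j}"
      using upd_basis[OF x i] that by auto
  qed
  have inj: "inj_on (\<lambda>t. x(i := t)) {..<d}"
    by (rule inj_onI) (metis fun_upd_same)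
  have "(\<Sum>z\<in>basis d n. if (\<forall>j. j \<noteq> i \<longrightarrow> x j = z j) then f z else 0)
      = (\<Sum>z\<in>basis d n. if (\<forall>j. j \<noteq> i \<longrightarrow> P x z j) then f z else 0)" by (simp only: eq)
  also have "\<dots> = sum f {z \<in> basis d n. \<forall>j. j \<noteq> i \<longrightarrow> P x z j}"
    by (rule sum.inter_filter[symmetric, OF basis_finite])
  also have "\<dots> = sum f ((\<lambda>t. x(i := t)) ` {..<d})" by (simp only: set)
  also have "\<dots> = (\<Sum>t<d. f (x(i := t)))" by (simp add: sum.reindex[OF inj])
  finally show ?thesis .
qed

lemma sum_site2:
  assumes x: "x \<in> basis d n" and i: "i < n"
  shows "(\<Sum>z\<in>basis d n. if (\<forall>j. j \<noteq> i \<longrightarrow> z j = x j) then f z else 0) = (\<Sum>t<d. f (x(i := t)))"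
proof -
  have "(\<forall>j. j \<noteq> i \<longrightarrow> z j = x j) \<longleftrightarrow> (\<forall>j. j \<noteq> i \<longrightarrow> x j = z j)" for z by auto
  then show ?thesis using sum_site[OF x i, of f] by simp
qed

definition pf :: "nat \<Rightarrow> int \<Rightarrow> int \<Rightarrow> nat \<Rightarrow> nat \<Rightarrow> complex" where
  "pf d al bl s t = (if int s = (int t + bl) mod int d then wpow d (al * int s) else 0)"

lemma pauli_prod: "x \<in> basis d n \<Longrightarrow> y \<in> basis d n \<Longrightarrow>
  pauli d n k a b x y = wpow d k * (\<Prod>l<n. pf d (a l) (b l) (x l) (y l))"
  by (simp add: pauli_def pf_def)

lemma pauli_split: "x \<in> basis d n \<Longrightarrow> y \<in> basis d n \<Longrightarrow> i < n \<Longrightarrow>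
  pauli d n k a b x y = wpow d k * pf d (a i) (b i) (x i) (y i) * (\<Prod>l\<in>{..<n}-{i}. pf d (a l) (b l) (x l) (y l))"
  by (simp add: pauli_prod prod.remove mult.assoc)

lemma one_qudit_apply: "x \<in> basis d n \<Longrightarrow> y \<in> basis d n \<Longrightarrow>
  one_qudit d n G i x y = (if (\<forall>j. j \<noteq> i \<longrightarrow> x j = y j) then G (x i) (y i) else 0)"
  by (simp add: one_qudit_def)

lemma oq_intertwine:
  assumes i: "i < n"
    and single: "\<forall>s<d. \<forall>u<d. (\<Sum>t<d. G s t * pf d (a i) (b i) t u) = c * (\<Sum>t<d. pf d ai' bi' s t * G t u)"
  shows "mmult d n (one_qudit d n G i) (pauli d n k a b) = scal c (mmult d n (pauli d n k (a(i:=ai')) (b(i:=bi'))) (one_qudit d n G i))"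
proof (intro ext)
  fix x y
  show "mmult d n (one_qudit d n G i) (pauli d n k a b) x y = scal c (mmult d n (pauli d n k (a(i:=ai')) (b(i:=bi'))) (one_qudit d n G i)) x y"
  proof (cases "x \<in> basis d n \<and> y \<in> basis d n")
    case True
    then have x: "x \<in> basis d n" and y: "y \<in> basis d n" by auto
    define R where "R = (\<Prod>l\<in>{..<n}-{i}. pf d (a l) (b l) (x l) (y l))"
    have R': "(\<Prod>l\<in>{..<n}-{i}. pf d ((a(i:=ai')) l) ((b(i:=bi')) l) (x l) ((y(i:=t)) l)) = R" for t
      unfolding R_def by (rule prod.cong) auto
    have R'': "(\<Prod>l\<in>{..<n}-{i}. pf d (a l) (b l) ((x(i:=t)) l) (y l)) = R" for t
      unfolding R_def by (rule prod.cong) auto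
    have "mmult d n (one_qudit d n G i) (pauli d n k a b) x y
        = (\<Sum>z\<in>basis d n. if (\<forall>j. j \<noteq> i \<longrightarrow> x j = z j) then G (x i) (z i) * pauli d n k a b z y else 0)"
      using x y by (auto simp: mmult_apply one_qudit_apply intro!: sum.cong)
    also have "\<dots> = (\<Sum>t<d. G (x i) t * pauli d n k a b (x(i:=t)) y)"
      by (subst sum_site[OF x i]) auto
    also have "\<dots> = (\<Sum>t<d. G (x i) t * (wpow d k * pf d (a i) (b i) t (y i) * R))"
      using x y i upd_basis[OF x i] by (intro sum.cong refl) (simp add: pauli_split[of _ d n _ i] R_def)
    also have "\<dots> = wpow d k * R * (\<Sum>t<d. G (x i) t * pf d (a i) (b i) t (y i))"
      by (simp add: sum_distrib_left mult_ac)
    also have "\<dots> = wpow d k * R * (c * (\<Sum>t<d. pf d ai' bi' (x i) t * G t (y i)))"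
      using single basis_lt[OF x i] basis_lt[OF y i] by simp
    also have "\<dots> = c * (\<Sum>t<d. (wpow d k * pf d ai' bi' (x i) t * R) * G t (y i))"
      by (simp add: sum_distrib_left mult_ac)
    also have "\<dots> = c * (\<Sum>t<d. pauli d n k (a(i:=ai')) (b(i:=bi')) x (y(i:=t)) * G t (y i))"
      using x y i upd_basis[OF y i] by (intro arg_cong[where f="\<lambda>s. c * s"] sum.cong refl) (simp add: pauli_split[of _ d n _ i] R_def)
    also have "(\<Sum>t<d. pauli d n k (a(i:=ai')) (b(i:=bi')) x (y(i:=t)) * G t (y i))
        = (\<Sum>z\<in>basis d n. if (\<forall>j. j \<noteq> i \<longrightarrow> z j = y j) then pauli d n k (a(i:=ai')) (b(i:=bi')) x z * G (z i) (y i) else 0)"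
      by (subst sum_site2[OF y i]) auto
    also have "\<dots> = mmult d n (pauli d n k (a(i:=ai')) (b(i:=bi'))) (one_qudit d n G i) x y"
      using x y by (auto simp: mmult_apply one_qudit_apply intro!: sum.cong)
    finally show ?thesis by (simp add: scal_def)
  qed (auto simp: mmult_def scal_def)
qed

lemma oq_inverse:
  assumes i: "i < n"
    and single: "\<forall>s<d. \<forall>u<d. (\<Sum>t<d. G s t * H t u) = (if s = u then 1 else 0)"
  shows "mmult d n (one_qudit d n G i) (one_qudit d n H i) = ident d n"
proof (intro ext)
  fix x y
  show "mmult d n (one_qudit d n G i) (one_qudit d n H i) x y = ident d n x y"
  proof (cases "x \<in> basis d n \<and> y \<in> basis d n")
    case True
    then have x: "x \<in> basis d n" and y: "y \<in> basis d n" by auto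
    have "mmult d n (one_qudit d n G i) (one_qudit d n H i) x y
        = (\<Sum>z\<in>basis d n. if (\<forall>j. j \<noteq> i \<longrightarrow> x j = z j) then G (x i) (z i) * one_qudit d n H i z y else 0)"
      using x y by (auto simp: mmult_apply one_qudit_apply intro!: sum.cong)
    also have "\<dots> = (\<Sum>t<d. G (x i) t * one_qudit d n H i (x(i:=t)) y)"
      by (subst sum_site[OF x i]) auto
    also have "\<dots> = (\<Sum>t<d. G (x i) t * (if (\<forall>j. j \<noteq> i \<longrightarrow> x j = y j) then H t (y i) else 0))"
      using x y i upd_basis[OF x i] by (intro sum.cong refl) (auto simp add: one_qudit_apply)
    also have "\<dots> = (if (\<forall>j. j \<noteq> i \<longrightarrow> x j = y j) then (if x i = y i then 1 else 0) else 0)"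
    proof (cases "\<forall>j. j \<noteq> i \<longrightarrow> x j = y j")
      case True
      then show ?thesis using single basis_lt[OF x i] basis_lt[OF y i] by simp
    next
      case False
      then show ?thesis by (simp only: if_False mult_zero_right sum.neutral_const)
    qed
    also have "\<dots> = ident d n x y"
      using x y by (auto simp: ident_def fun_eq_iff)
    finally show ?thesis .
  qed (auto simp: mmult_def ident_def)
qed

lemma sum_collapse:
  assumes d: "d > 0"
  shows "(\<Sum>t<d. (if int t = X mod int d then g t else 0)) = g (nat (X mod int d))"
proof -
  have "(\<Sum>t<d. (if int t = X mod int d then g t else 0)) = (\<Sum>t<d. (if t = nat (X mod int d) then g t else 0))"
    using d by (intro sum.cong refl) auto
  also have "\<dots> = g (nat (X mod int d))"
    using d by (simp add: sum.delta' nat_less_iff)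
  finally show ?thesis .
qed

lemma cond_flip:
  assumes d: "d > 0" and s: "s < d" and t: "t < d"
  shows "(int s = (int t + B) mod int d) \<longleftrightarrow> (int t = (int s - B) mod int d)"
proof -
  have "(int s = (int t + B) mod int d) \<longleftrightarrow> int d dvd (int s - (int t + B))"
    using d s by (intro eq_mod_dvd) auto
  also have "\<dots> \<longleftrightarrow> int d dvd (int t - (int s - B))"
  proof -
    have "int t - (int s - B) = - (int s - (int t + B))" by simp
    then show ?thesis by (simp only: dvd_minus_iff)
  qed
  also have "\<dots> \<longleftrightarrow> (int t = (int s - B) mod int d)"
    using d t by (intro eq_mod_dvd[symmetric]) auto
  finally show ?thesis .
qed

lemma F_single:
  assumes d: "d > 0" and s: "s < d" and u: "u < d"
  shows "(\<Sum>t<d. Fmat d s t * pf d a b t u) = wpow d (a * b) * (\<Sum>t<d. pf d b (-a) s t * Fmat d t u)"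
proof -
  define T0 where "T0 = (int u + b) mod int d"
  define T1 where "T1 = (int s + a) mod int d"
  have T0: "T0 \<ge> 0" using d by (simp add: T0_def)
  have T1: "T1 \<ge> 0" using d by (simp add: T1_def)
  have "(\<Sum>t<d. Fmat d s t * pf d a b t u) = (\<Sum>t<d. if int t = (int u + b) mod int d then Fmat d s t * wpow d (a * int t) else 0)"
    by (intro sum.cong refl) (simp add: pf_def)
  also have "\<dots> = Fmat d s (nat T0) * wpow d (a * T0)"
    using T0 by (simp add: sum_collapse[OF d] T0_def)
  also have "\<dots> = wpow d (T0 * int s + a * T0) / complex_of_real (sqrt (real d))"
    using T0 by (simp add: Fmat_def wpow_add)
  finally have L: "(\<Sum>t<d. Fmat d s t * pf d a b t u) = wpow d (T0 * int s + a * T0) / complex_of_real (sqrt (real d))" .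
  have "(\<Sum>t<d. pf d b (-a) s t * Fmat d t u) = (\<Sum>t<d. if int t = (int s - - a) mod int d then wpow d (b * int s) * Fmat d t u else 0)"
    using d s by (intro sum.cong refl) (auto simp: pf_def cond_flip)
  also have "\<dots> = wpow d (b * int s) * Fmat d (nat T1) u"
    using T1 by (simp add: sum_collapse[OF d] T1_def)
  also have "\<dots> = wpow d (b * int s + int u * T1) / complex_of_real (sqrt (real d))"
    using T1 by (simp add: Fmat_def wpow_add)
  finally have R: "(\<Sum>t<d. pf d b (-a) s t * Fmat d t u) = wpow d (b * int s + int u * T1) / complex_of_real (sqrt (real d))" .
  obtain q0 where q0: "T0 = int u + b - int d * q0"
    unfolding T0_def by (metis minus_div_mult_eq_mod mult.commute)
  obtain q1 where q1: "T1 = int s + a - int d * q1"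
    unfolding T1_def by (metis minus_div_mult_eq_mod mult.commute)
  have "T0 * int s + a * T0 - (a * b + (b * int s + int u * T1)) = int d * (int u * q1 - q0 * (int s + a))"
    unfolding q0 q1 by (simp add: algebra_simps)
  then have "wpow d (T0 * int s + a * T0) = wpow d (a * b + (b * int s + int u * T1))"
    using d by (intro wpow_cong_dvd) auto
  then show ?thesis unfolding L R by (simp add: wpow_add)
qed

definition Finv :: "nat \<Rightarrow> nat \<Rightarrow> nat \<Rightarrow> complex" where
  "Finv d m j = wpow d (- (int j * int m)) / complex_of_real (sqrt (real d))"

lemma sqrt_sq_c: "complex_of_real (sqrt (real d)) * complex_of_real (sqrt (real d)) = of_nat d"
  by (subst of_real_mult[symmetric]) simp

lemma dvd_small: "d > 0 \<Longrightarrow> s < d \<Longrightarrow> u < d \<Longrightarrow> int d dvd (int s - int u) \<longleftrightarrow> s = u"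
proof
  assume d: "d > 0" and s: "s < d" and u: "u < d" and dv: "int d dvd (int s - int u)"
  have "int s mod int d = int u mod int d" using dv by (simp add: mod_eq_dvd_iff)
  then show "s = u" using s u by simp
qed simp

lemma F_inv1:
  assumes d: "d > 0" and s: "s < d" and u: "u < d"
  shows "(\<Sum>t<d. Fmat d s t * Finv d t u) = (if s = u then 1 else 0)"
proof -
  have "(\<Sum>t<d. Fmat d s t * Finv d t u) = (\<Sum>t<d. wpow d (int t * (int s - int u))) / of_nat d"
  proof -
    have "Fmat d s t * Finv d t u = wpow d (int t * (int s - int u)) / of_nat d" for t
    proof -
      have "Fmat d s t * Finv d t u = (wpow d (int t * int s) * wpow d (- (int u * int t))) /
          (complex_of_real (sqrt (real d)) * complex_of_real (sqrt (real d)))"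
        by (simp add: Fmat_def Finv_def)
      also have "\<dots> = wpow d (int t * int s + - (int u * int t)) / of_nat d"
        by (simp only: sqrt_sq_c wpow_add)
      also have "int t * int s + - (int u * int t) = int t * (int s - int u)" by (simp add: algebra_simps)
      finally show ?thesis .
    qed
    then show ?thesis by (simp add: sum_divide_distrib)
  qed
  also have "\<dots> = (if s = u then 1 else 0)"
    using d s u by (simp add: charsum dvd_small)
  finally show ?thesis .
qed

lemma F_inv2:
  assumes d: "d > 0" and s: "s < d" and u: "u < d"
  shows "(\<Sum>t<d. Finv d s t * Fmat d t u) = (if s = u then 1 else 0)"
proof -
  have "(\<Sum>t<d. Finv d s t * Fmat d t u) = (\<Sum>t<d. wpow d (int t * (int u - int s))) / of_nat d"
  proof -
    have "Finv d s t * Fmat d t u = wpow d (int t * (int u - int s)) / of_nat d" for t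
    proof -
      have "Finv d s t * Fmat d t u = (wpow d (- (int t * int s)) * wpow d (int u * int t)) /
          (complex_of_real (sqrt (real d)) * complex_of_real (sqrt (real d)))"
        by (simp add: Fmat_def Finv_def)
      also have "\<dots> = wpow d (- (int t * int s) + int u * int t) / of_nat d"
        by (simp only: sqrt_sq_c wpow_add)
      also have "- (int t * int s) + int u * int t = int t * (int u - int s)" by (simp add: algebra_simps)
      finally show ?thesis .
    qed
    then show ?thesis by (simp add: sum_divide_distrib)
  qed
  also have "\<dots> = (if s = u then 1 else 0)"
    using d s u dvd_small[OF d u s] by (simp add: charsum)
  finally show ?thesis .
qed

definition Ef :: "int \<Rightarrow> int" where "Ef v = v * (v + 1) div 2"

lemma two_Ef: "2 * Ef v = v * (v + 1)"
proof -
  have "even (v * (v + 1))" by simp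
  then show ?thesis unfolding Ef_def by simp
qed

lemma odd_dvd2: "odd d \<Longrightarrow> int d dvd 2 * X \<Longrightarrow> int d dvd X"
proof -
  assume o: "odd d" and h: "int d dvd 2 * X"
  have "coprime (int d) 2" using o by simp
  then show ?thesis using h coprime_dvd_mult_right_iff by blast
qed

lemma S_single:
  assumes d: "d > 0" and od: "odd d" and s: "s < d" and u: "u < d"
  shows "(\<Sum>t<d. Smat d s t * pf d a b t u) = wpow d (Ef b - b * b) * (\<Sum>t<d. pf d (a + b) b s t * Smat d t u)"
proof -
  have L: "(\<Sum>t<d. Smat d s t * pf d a b t u) = wpow d (Ef (int s)) * pf d a b s u"
  proof -
    have "(\<Sum>t<d. Smat d s t * pf d a b t u) = (\<Sum>t<d. if t = s then wpow d (Ef (int s)) * pf d a b s u else 0)"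
      by (intro sum.cong refl) (auto simp: Smat_def Ef_def)
    also have "\<dots> = wpow d (Ef (int s)) * pf d a b s u" using s by (simp add: sum.delta)
    finally show ?thesis .
  qed
  have R: "(\<Sum>t<d. pf d (a + b) b s t * Smat d t u) = pf d (a + b) b s u * wpow d (Ef (int u))"
  proof -
    have "(\<Sum>t<d. pf d (a + b) b s t * Smat d t u) = (\<Sum>t<d. if t = u then pf d (a + b) b s u * wpow d (Ef (int u)) else 0)"
      by (intro sum.cong refl) (auto simp: Smat_def Ef_def)
    also have "\<dots> = pf d (a + b) b s u * wpow d (Ef (int u))" using u by (simp add: sum.delta)
    finally show ?thesis .
  qed
  show ?thesis
  proof (cases "int s = (int u + b) mod int d")
    case True
    obtain q where q: "int s = int u + b - int d * q"
      using True by (metis minus_div_mult_eq_mod mult.commute)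
    define X where "X = Ef (int s) + a * int s - (Ef b - b * b + ((a + b) * int s + Ef (int u)))"
    have "2 * X = 2 * Ef (int s) - 2 * Ef b - 2 * Ef (int u) + 2 * b * b - 2 * b * int s"
      unfolding X_def by (simp add: algebra_simps)
    also have "\<dots> = int s * (int s + 1) - b * (b + 1) - int u * (int u + 1) + 2 * b * b - 2 * b * int s"
      by (simp only: two_Ef)
    also have "\<dots> = int d * (q * (int d * q - 2 * int u - 1))"
      unfolding q by (simp add: algebra_simps)
    finally have "int d dvd 2 * X" by simp
    then have "int d dvd X" by (rule odd_dvd2[OF od])
    then have "wpow d (Ef (int s) + a * int s) = wpow d (Ef b - b * b + ((a + b) * int s + Ef (int u)))"
      using d unfolding X_def by (intro wpow_cong_dvd) auto
    then show ?thesis using True unfolding L R by (simp add: pf_def wpow_add mult_ac)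
  next
    case False
    then show ?thesis unfolding L R by (simp add: pf_def)
  qed
qed

definition Sinv :: "nat \<Rightarrow> nat \<Rightarrow> nat \<Rightarrow> complex" where
  "Sinv d m j = (if m = j then wpow d (- Ef (int j)) else 0)"

lemma S_inv1:
  assumes s: "s < d" and u: "u < d"
  shows "(\<Sum>t<d. Smat d s t * Sinv d t u) = (if s = u then 1 else 0)"
proof -
  have "(\<Sum>t<d. Smat d s t * Sinv d t u) = (\<Sum>t<d. if t = s then (if s = u then 1 else 0) else 0)"
    by (intro sum.cong refl) (auto simp: Smat_def Sinv_def Ef_def simp flip: wpow_add)
  then show ?thesis using s by (simp add: sum.delta)
qed

lemma S_inv2:
  assumes s: "s < d" and u: "u < d"
  shows "(\<Sum>t<d. Sinv d s t * Smat d t u) = (if s = u then 1 else 0)"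
proof -
  have "(\<Sum>t<d. Sinv d s t * Smat d t u) = (\<Sum>t<d. if t = s then (if s = u then 1 else 0) else 0)"
    by (intro sum.cong refl) (auto simp: Smat_def Sinv_def Ef_def simp flip: wpow_add)
  then show ?thesis using s by (simp add: sum.delta)
qed

definition sig :: "nat \<Rightarrow> nat \<Rightarrow> nat \<Rightarrow> (nat \<Rightarrow> nat) \<Rightarrow> (nat \<Rightarrow> nat)" where
  "sig d i j y = y(j := (y i + y j) mod d)"
definition tau :: "nat \<Rightarrow> nat \<Rightarrow> nat \<Rightarrow> (nat \<Rightarrow> nat) \<Rightarrow> (nat \<Rightarrow> nat)" where
  "tau d i j x = x(j := (x j + d - x i) mod d)"

lemma sig_basis: "d > 0 \<Longrightarrow> j < n \<Longrightarrow> y \<in> basis d n \<Longrightarrow> sig d i j y \<in> basis d n"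
  by (auto simp: sig_def basis_def)
lemma tau_basis: "d > 0 \<Longrightarrow> j < n \<Longrightarrow> x \<in> basis d n \<Longrightarrow> tau d i j x \<in> basis d n"
  by (auto simp: tau_def basis_def)

lemma nat_mod1: "yi < d \<Longrightarrow> yj < d \<Longrightarrow> ((yi + yj) mod d + d - yi) mod d = (yj::nat)"
proof -
  assume a: "yi < d" "yj < d"
  show ?thesis
  proof (cases "yi + yj < d")
    case True
    then have "(yi + yj) mod d + d - yi = yj + d" by simp
    then show ?thesis using a by simp
  next
    case False
    then have "(yi + yj) mod d = yi + yj - d" using a by (simp add: mod_if)
    then have "(yi + yj) mod d + d - yi = yj" using False by simp
    then show ?thesis using a by simp
  qed
qed

lemma nat_mod2: "xi < d \<Longrightarrow> xj < d \<Longrightarrow> (xi + (xj + d - xi) mod d) mod d = (xj::nat)"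
proof -
  assume a: "xi < d" "xj < d"
  show ?thesis
  proof (cases "xi \<le> xj")
    case True
    then have "(xj + d - xi) mod d = xj - xi" using a by (simp add: mod_if)
    then show ?thesis using a True by simp
  next
    case False
    then have "(xj + d - xi) mod d = xj + d - xi" using a by simp
    then have "xi + (xj + d - xi) mod d = xj + d" using a by linarith
    then show ?thesis using a by simp
  qed
qed

lemma tau_sig: "i \<noteq> j \<Longrightarrow> i < n \<Longrightarrow> j < n \<Longrightarrow> y \<in> basis d n \<Longrightarrow> tau d i j (sig d i j y) = y"
  using nat_mod1[of "y i" d "y j"] by (auto simp: tau_def sig_def fun_eq_iff basis_def)

lemma sig_tau: "i \<noteq> j \<Longrightarrow> i < n \<Longrightarrow> j < n \<Longrightarrow> x \<in> basis d n \<Longrightarrow> sig d i j (tau d i j x) = x"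
  using nat_mod2[of "x i" d "x j"] by (auto simp: tau_def sig_def fun_eq_iff basis_def)

lemma cx_apply: "x \<in> basis d n \<Longrightarrow> y \<in> basis d n \<Longrightarrow> cx_gate d n i j x y = (if x = sig d i j y then 1 else 0)"
proof -
  assume "x \<in> basis d n" "y \<in> basis d n"
  moreover have "((\<forall>l. l \<noteq> j \<longrightarrow> x l = y l) \<and> x j = (y i + y j) mod d) \<longleftrightarrow> x = sig d i j y"
    by (auto simp: sig_def fun_eq_iff)
  ultimately show ?thesis by (simp add: cx_gate_def)
qed

lemma cx_left:
  assumes ij: "i \<noteq> j" "i < n" "j < n" and d: "d > 0"
  shows "mmult d n (cx_gate d n i j) M = restr d n (\<lambda>x y. M (tau d i j x) y)"
proof (intro ext)
  fix x y
  show "mmult d n (cx_gate d n i j) M x y = restr d n (\<lambda>x y. M (tau d i j x) y) x y"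
  proof (cases "x \<in> basis d n \<and> y \<in> basis d n")
    case True
    then have x: "x \<in> basis d n" and y: "y \<in> basis d n" by auto
    have "mmult d n (cx_gate d n i j) M x y = (\<Sum>z\<in>basis d n. if z = tau d i j x then M z y else 0)"
    proof -
      have "z \<in> basis d n \<Longrightarrow> (x = sig d i j z) \<longleftrightarrow> (z = tau d i j x)" for z
        using tau_sig[OF ij, of z d] sig_tau[OF ij x] by auto
      then show ?thesis using x y by (auto simp: mmult_apply cx_apply intro!: sum.cong)
    qed
    also have "\<dots> = M (tau d i j x) y" using tau_basis[OF d ij(3) x] by (simp add: sum.delta basis_finite)
    finally show ?thesis using x y by simp
  qed (auto simp: mmult_def)
qed

lemma cx_right:
  assumes ij: "i \<noteq> j" "i < n" "j < n" and d: "d > 0"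
  shows "mmult d n M (cx_gate d n i j) = restr d n (\<lambda>x y. M x (sig d i j y))"
proof (intro ext)
  fix x y
  show "mmult d n M (cx_gate d n i j) x y = restr d n (\<lambda>x y. M x (sig d i j y)) x y"
  proof (cases "x \<in> basis d n \<and> y \<in> basis d n")
    case True
    then have x: "x \<in> basis d n" and y: "y \<in> basis d n" by auto
    have "mmult d n M (cx_gate d n i j) x y = (\<Sum>z\<in>basis d n. if z = sig d i j y then M x z else 0)"
      using x y by (auto simp: mmult_apply cx_apply intro!: sum.cong)
    also have "\<dots> = M x (sig d i j y)" using sig_basis[OF d ij(3) y] by (simp add: sum.delta basis_finite)
    finally show ?thesis using x y by simp
  qed (auto simp: mmult_def)
qed

definition cxi :: "nat \<Rightarrow> nat \<Rightarrow> nat \<Rightarrow> nat \<Rightarrow> op" where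
  "cxi d n i j = restr d n (\<lambda>x y. if x = tau d i j y then 1 else 0)"

lemma cx_inv1:
  assumes ij: "i \<noteq> j" "i < n" "j < n" and d: "d > 0"
  shows "mmult d n (cx_gate d n i j) (cxi d n i j) = ident d n"
proof -
  have "restr d n (\<lambda>x y. cxi d n i j (tau d i j x) y) = ident d n"
  proof (intro ext)
    fix x y
    show "restr d n (\<lambda>x y. cxi d n i j (tau d i j x) y) x y = ident d n x y"
    proof (cases "x \<in> basis d n \<and> y \<in> basis d n")
      case True
      then have x: "x \<in> basis d n" and y: "y \<in> basis d n" by auto
      have "tau d i j x = tau d i j y \<longleftrightarrow> x = y"
        using sig_tau[OF ij x] sig_tau[OF ij y] by metis
      then show ?thesis using x y tau_basis[OF d ij(3) x] by (simp add: cxi_def ident_def)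
    qed (auto simp: ident_def)
  qed
  then show ?thesis by (simp add: cx_left[OF ij d])
qed

lemma cx_inv2:
  assumes ij: "i \<noteq> j" "i < n" "j < n" and d: "d > 0"
  shows "mmult d n (cxi d n i j) (cx_gate d n i j) = ident d n"
proof -
  have "restr d n (\<lambda>x y. cxi d n i j x (sig d i j y)) = ident d n"
  proof (intro ext)
    fix x y
    show "restr d n (\<lambda>x y. cxi d n i j x (sig d i j y)) x y = ident d n x y"
    proof (cases "x \<in> basis d n \<and> y \<in> basis d n")
      case True
      then have x: "x \<in> basis d n" and y: "y \<in> basis d n" by auto
      then show ?thesis using x y sig_basis[OF d ij(3) y] tau_sig[OF ij y] by (simp add: cxi_def ident_def)
    qed (auto simp: ident_def)
  qed
  then show ?thesis by (simp add: cx_right[OF ij d])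
qed

lemma sum_upd_gen: "finite A \<Longrightarrow> j \<in> A \<Longrightarrow> (\<forall>l\<in>A-{j}. f l = g l) \<Longrightarrow> sum f A = sum g A - g j + (f j :: int)"
proof -
  assume A: "finite A" "j \<in> A" and h: "\<forall>l\<in>A-{j}. f l = g l"
  have "sum f A = f j + sum f (A - {j})" using A by (simp add: sum.remove)
  moreover have "sum g A = g j + sum g (A - {j})" using A by (simp add: sum.remove)
  moreover have "sum f (A - {j}) = sum g (A - {j})" using h by (intro sum.cong) auto
  ultimately show ?thesis by simp
qed

lemma cx_intertwine:
  assumes ij: "i \<noteq> j" "i < n" "j < n" and d: "d > 0"
  shows "mmult d n (cx_gate d n i j) (pauli d n k a b) =
         mmult d n (pauli d n k (a(i := a i - a j)) (b(j := b j + b i))) (cx_gate d n i j)"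
proof -
  have "restr d n (\<lambda>x y. pauli d n k a b (tau d i j x) y) =
        restr d n (\<lambda>x y. pauli d n k (a(i := a i - a j)) (b(j := b j + b i)) x (sig d i j y))"
  proof (intro ext)
    fix x y
    show "restr d n (\<lambda>x y. pauli d n k a b (tau d i j x) y) x y =
        restr d n (\<lambda>x y. pauli d n k (a(i := a i - a j)) (b(j := b j + b i)) x (sig d i j y)) x y"
    proof (cases "x \<in> basis d n \<and> y \<in> basis d n")
      case True
      then have x: "x \<in> basis d n" and y: "y \<in> basis d n" by auto
      have xl: "l < n \<Longrightarrow> x l < d" for l using x by (auto simp: basis_def)
      have yl: "l < n \<Longrightarrow> y l < d" for l using y by (auto simp: basis_def)
      let ?tx = "tau d i j x" and ?sy = "sig d i j y"
      let ?a' = "a(i := a i - a j)" and ?b' = "b(j := b j + b i)"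
      have txl: "l < n \<Longrightarrow> ?tx l < d" for l using tau_basis[OF d ij(3) x] by (auto simp: basis_def)
      have D: "\<And>v W. v < d \<Longrightarrow> (int v = W mod int d) \<longleftrightarrow> int d dvd (int v - W)"
        using d by (intro eq_mod_dvd) auto
      have txj: "int (?tx j) = (int (x j) - int (x i)) mod int d"
      proof -
        have "int (?tx j) = int ((x j + d - x i) mod d)" by (simp add: tau_def)
        also have "\<dots> = int (x j + d - x i) mod int d" by (simp add: zmod_int)
        also have "int (x j + d - x i) = (int (x j) - int (x i)) + int d * 1" using xl[OF ij(2)] by simp
        also have "(int (x j) - int (x i) + int d * 1) mod int d = (int (x j) - int (x i)) mod int d"
          by (simp only: mod_mult_self2)
        finally show ?thesis .
      qed
      have syj: "int (?sy j) = (int (y i) + int (y j)) mod int d"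
        by (simp add: sig_def zmod_int)
      have c1: "(\<forall>l<n. int (?tx l) = (int (y l) + b l) mod int d) \<longleftrightarrow>
                (\<forall>l<n. int d dvd (int (?tx l) - (int (y l) + b l)))"
        using D txl by auto
      have c2: "(\<forall>l<n. int (x l) = (int (?sy l) + ?b' l) mod int d) \<longleftrightarrow>
                (\<forall>l<n. int d dvd (int (x l) - (int (?sy l) + ?b' l)))"
        using D xl by auto
      have cj1: "int d dvd (int (?tx j) - (int (y j) + b j)) \<longleftrightarrow> int d dvd (int (x j) - int (x i) - (int (y j) + b j))"
        unfolding txj by (simp add: mod_eq_dvd_iff[symmetric] mod_diff_left_eq)
      have cj2: "int d dvd (int (x j) - (int (?sy j) + ?b' j)) \<longleftrightarrow> int d dvd (int (x j) - (int (y i) + int (y j)) - (b j + b i))"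
      proof -
        have "int d dvd (int (x j) - (int (?sy j) + ?b' j)) \<longleftrightarrow> int d dvd ((int (x j) - (b j + b i)) - (int (y i) + int (y j)) mod int d)"
          unfolding syj by (simp add: algebra_simps)
        also have "\<dots> \<longleftrightarrow> int d dvd ((int (x j) - (b j + b i)) - (int (y i) + int (y j)))"
          by (simp add: mod_eq_dvd_iff[symmetric] mod_diff_right_eq)
        finally show ?thesis by (simp add: algebra_simps)
      qed
      have C: "(\<forall>l<n. int (?tx l) = (int (y l) + b l) mod int d) \<longleftrightarrow>
               (\<forall>l<n. int (x l) = (int (?sy l) + ?b' l) mod int d)"
      proof -
        have eqo: "l \<noteq> j \<Longrightarrow> int d dvd (int (?tx l) - (int (y l) + b l)) \<longleftrightarrow> int d dvd (int (x l) - (int (?sy l) + ?b' l))" for l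
          by (simp add: tau_def sig_def)
        have ci: "int d dvd (int (?tx i) - (int (y i) + b i)) \<longleftrightarrow> int d dvd (int (x i) - int (y i) - b i)"
          using ij by (simp add: tau_def algebra_simps)
        have key: "int d dvd (int (x i) - int (y i) - b i) \<Longrightarrow>
            (int d dvd (int (x j) - int (x i) - (int (y j) + b j)) \<longleftrightarrow> int d dvd (int (x j) - (int (y i) + int (y j)) - (b j + b i)))"
        proof -
          assume h: "int d dvd (int (x i) - int (y i) - b i)"
          have "int (x j) - (int (y i) + int (y j)) - (b j + b i) = (int (x j) - int (x i) - (int (y j) + b j)) + (int (x i) - int (y i) - b i)"
            by simp
          then show ?thesis using h by (metis dvd_add_left_iff)
        qed
        show ?thesis unfolding c1 c2
        proof
          assume H: "\<forall>l<n. int d dvd (int (?tx l) - (int (y l) + b l))"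
          show "\<forall>l<n. int d dvd (int (x l) - (int (?sy l) + ?b' l))"
          proof (intro allI impI)
            fix l assume l: "l < n"
            show "int d dvd (int (x l) - (int (?sy l) + ?b' l))"
            proof (cases "l = j")
              case True
              have hi: "int d dvd (int (x i) - int (y i) - b i)" using H ij ci by auto
              show ?thesis using H ij(3) cj1 cj2 key[OF hi] True by auto
            qed (use H l eqo in auto)
          qed
        next
          assume H: "\<forall>l<n. int d dvd (int (x l) - (int (?sy l) + ?b' l))"
          show "\<forall>l<n. int d dvd (int (?tx l) - (int (y l) + b l))"
          proof (intro allI impI)
            fix l assume l: "l < n"
            show "int d dvd (int (?tx l) - (int (y l) + b l))"
            proof (cases "l = j")
              case True
              have hi: "int d dvd (int (x i) - int (y i) - b i)" using H ij eqo[of i] ci by auto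
              show ?thesis using H ij(3) cj1 cj2 key[OF hi] True by auto
            qed (use H l eqo in auto)
          qed
        qed
      qed
      have W: "wpow d (k + (\<Sum>l<n. a l * int (?tx l))) = wpow d (k + (\<Sum>l<n. ?a' l * int (x l)))"
      proof -
        have s1: "(\<Sum>l<n. a l * int (?tx l)) = (\<Sum>l<n. a l * int (x l)) - a j * int (x j) + a j * int (?tx j)"
          by (rule sum_upd_gen) (use ij in \<open>auto simp: tau_def\<close>)
        have s2': "(\<Sum>l<n. ?a' l * int (x l)) = (\<Sum>l<n. a l * int (x l)) - a i * int (x i) + ?a' i * int (x i)"
          by (rule sum_upd_gen) (use ij in auto)
        have s2: "(\<Sum>l<n. ?a' l * int (x l)) = (\<Sum>l<n. a l * int (x l)) - a i * int (x i) + (a i - a j) * int (x i)"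
          using s2' by simp
        have "int d dvd (int (?tx j) - (int (x j) - int (x i)))"
          unfolding txj by (simp add: mod_eq_dvd_iff[symmetric])
        then have "int d dvd (a j * (int (?tx j) - (int (x j) - int (x i))))" by simp
        moreover have "k + (\<Sum>l<n. a l * int (?tx l)) - (k + (\<Sum>l<n. ?a' l * int (x l))) = a j * (int (?tx j) - (int (x j) - int (x i)))"
          unfolding s1 s2 by (simp add: algebra_simps)
        ultimately show ?thesis using d by (intro wpow_cong_dvd) auto
      qed
      show ?thesis using x y tau_basis[OF d ij(3) x] sig_basis[OF d ij(3) y]
        by (simp only: restr_in pauli_alt C W)
    qed auto
  qed
  then show ?thesis by (simp add: cx_left[OF ij d] cx_right[OF ij d])
qed

datatype gd = GF nat | GS nat | GC nat nat

fun gmat :: "nat \<Rightarrow> nat \<Rightarrow> gd \<Rightarrow> op" where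
  "gmat d n (GF i) = one_qudit d n (Fmat d) i"
| "gmat d n (GS i) = one_qudit d n (Smat d) i"
| "gmat d n (GC i j) = cx_gate d n i j"

fun gvalid :: "nat \<Rightarrow> gd \<Rightarrow> bool" where
  "gvalid n (GF i) = (i < n)"
| "gvalid n (GS i) = (i < n)"
| "gvalid n (GC i j) = (i < n \<and> j < n \<and> i \<noteq> j)"

fun act :: "gd \<Rightarrow> (nat \<Rightarrow> int) \<times> (nat \<Rightarrow> int) \<Rightarrow> (nat \<Rightarrow> int) \<times> (nat \<Rightarrow> int)" where
  "act (GF i) (a, b) = (a(i := b i), b(i := - a i))"
| "act (GS i) (a, b) = (a(i := a i + b i), b)"
| "act (GC i j) (a, b) = (a(i := a i - a j), b(j := b j + b i))"

lemma gate_ok: "gvalid n g \<Longrightarrow> gate d n (gmat d n g)"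
  by (cases g) (auto simp: gate_def)

lemma gate_inv:
  assumes d: "d > 0" and v: "gvalid n g"
  shows "\<exists>V. mmult d n (gmat d n g) V = ident d n \<and> mmult d n V (gmat d n g) = ident d n"
proof (cases g)
  case (GF i)
  then have i: "i < n" using v by simp
  show ?thesis unfolding GF
    by (rule exI[of _ "one_qudit d n (Finv d) i"]) (simp add: oq_inverse[OF i] F_inv1[OF d] F_inv2[OF d])
next
  case (GS i)
  then have i: "i < n" using v by simp
  show ?thesis unfolding GS
    by (rule exI[of _ "one_qudit d n (Sinv d) i"]) (simp add: oq_inverse[OF i] S_inv1 S_inv2)
next
  case (GC i j)
  then have ij: "i \<noteq> j" "i < n" "j < n" using v by auto
  show ?thesis unfolding GC
    by (rule exI[of _ "cxi d n i j"]) (simp add: cx_inv1[OF ij d] cx_inv2[OF ij d])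
qed

lemma scal_one: "scal 1 M = M" by (simp add: scal_def)

lemma gate_tw:
  assumes d: "d > 0" and od: "odd d" and v: "gvalid n g"
  shows "\<exists>c. mmult d n (gmat d n g) (pauli d n k a b) =
     scal c (mmult d n (pauli d n k (fst (act g (a, b))) (snd (act g (a, b)))) (gmat d n g))"
proof (cases g)
  case (GF i)
  then have i: "i < n" using v by simp
  have "mmult d n (one_qudit d n (Fmat d) i) (pauli d n k a b) =
     scal (wpow d (a i * b i)) (mmult d n (pauli d n k (a(i := b i)) (b(i := - a i))) (one_qudit d n (Fmat d) i))"
    by (rule oq_intertwine[OF i]) (simp add: F_single[OF d])
  then show ?thesis unfolding GF by auto
next
  case (GS i)
  then have i: "i < n" using v by simp
  have "mmult d n (one_qudit d n (Smat d) i) (pauli d n k a b) =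
     scal (wpow d (Ef (b i) - b i * b i)) (mmult d n (pauli d n k (a(i := a i + b i)) (b(i := b i))) (one_qudit d n (Smat d) i))"
    by (rule oq_intertwine[OF i]) (simp add: S_single[OF d od])
  then show ?thesis unfolding GS by auto
next
  case (GC i j)
  then have ij: "i \<noteq> j" "i < n" "j < n" using v by auto
  have "mmult d n (cx_gate d n i j) (pauli d n k a b) =
     scal 1 (mmult d n (pauli d n k (a(i := a i - a j)) (b(j := b j + b i))) (cx_gate d n i j))"
    by (simp only: scal_one cx_intertwine[OF ij d])
  then show ?thesis unfolding GC by auto
qed

primrec cof :: "nat \<Rightarrow> nat \<Rightarrow> gd list \<Rightarrow> op" where
  "cof d n [] = ident d n"
| "cof d n (g # gs) = mmult d n (gmat d n g) (cof d n gs)"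

primrec actl :: "gd list \<Rightarrow> (nat \<Rightarrow> int) \<times> (nat \<Rightarrow> int) \<Rightarrow> (nat \<Rightarrow> int) \<times> (nat \<Rightarrow> int)" where
  "actl [] v = v"
| "actl (g # gs) v = act g (actl gs v)"

lemma restr_ident[simp]: "restr d n (ident d n) = ident d n"
  by (auto simp: ident_def restr_def fun_eq_iff)

lemma restr_cof[simp]: "restr d n (cof d n gs) = cof d n gs"
  by (cases gs) auto

lemma chain:
  assumes d: "d > 0" and od: "odd d" and v: "\<forall>g\<in>set gs. gvalid n g"
  shows "circuit d n (cof d n gs) \<and>
    (\<exists>V. mmult d n (cof d n gs) V = ident d n \<and> mmult d n V (cof d n gs) = ident d n) \<and>
    (\<forall>a b. \<exists>c. mmult d n (cof d n gs) (pauli d n 0 a b) =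
        scal c (mmult d n (pauli d n 0 (fst (actl gs (a, b))) (snd (actl gs (a, b)))) (cof d n gs)))"
  using v
proof (induction gs)
  case Nil
  show ?case
  proof (intro conjI allI)
    show "circuit d n (cof d n [])" by (simp add: circ_id)
    show "\<exists>V. mmult d n (cof d n []) V = ident d n \<and> mmult d n V (cof d n []) = ident d n"
      by (rule exI[of _ "ident d n"]) (simp add: ident_left)
    fix a b
    show "\<exists>c. mmult d n (cof d n []) (pauli d n 0 a b) =
        scal c (mmult d n (pauli d n 0 (fst (actl [] (a, b))) (snd (actl [] (a, b)))) (cof d n []))"
      by (rule exI[of _ 1]) (simp add: ident_left ident_right scal_one)
  qed
next
  case (Cons g gs)
  then have vg: "gvalid n g" and IH: "circuit d n (cof d n gs) \<and>
    (\<exists>V. mmult d n (cof d n gs) V = ident d n \<and> mmult d n V (cof d n gs) = ident d n) \<and>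
    (\<forall>a b. \<exists>c. mmult d n (cof d n gs) (pauli d n 0 a b) =
        scal c (mmult d n (pauli d n 0 (fst (actl gs (a, b))) (snd (actl gs (a, b)))) (cof d n gs)))"
    by auto
  let ?U = "cof d n gs" and ?G = "gmat d n g"
  obtain V where V1: "mmult d n ?U V = ident d n" and V2: "mmult d n V ?U = ident d n" using IH by blast
  obtain W where W1: "mmult d n ?G W = ident d n" and W2: "mmult d n W ?G = ident d n"
    using gate_inv[OF d vg] by blast
  show ?case
  proof (intro conjI allI)
    show "circuit d n (cof d n (g # gs))" using IH gate_ok[OF vg] by (simp add: circ_step)
    show "\<exists>V. mmult d n (cof d n (g # gs)) V = ident d n \<and> mmult d n V (cof d n (g # gs)) = ident d n"
    proof (rule exI[of _ "mmult d n V W"], intro conjI)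
      have "mmult d n (mmult d n ?G ?U) (mmult d n V W) = mmult d n ?G (mmult d n (mmult d n ?U V) W)"
        by (simp add: mmult_assoc)
      also have "\<dots> = ident d n" by (simp add: V1 ident_left W1)
      finally show "mmult d n (cof d n (g # gs)) (mmult d n V W) = ident d n" by simp
      have "mmult d n (mmult d n V W) (mmult d n ?G ?U) = mmult d n V (mmult d n (mmult d n W ?G) ?U)"
        by (simp add: mmult_assoc)
      also have "\<dots> = ident d n" by (simp add: W2 ident_left V2)
      finally show "mmult d n (mmult d n V W) (cof d n (g # gs)) = ident d n" by simp
    qed
    fix a b
    obtain c where c: "mmult d n ?U (pauli d n 0 a b) =
        scal c (mmult d n (pauli d n 0 (fst (actl gs (a, b))) (snd (actl gs (a, b)))) ?U)"
      using IH by blast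
    obtain c' where c': "mmult d n ?G (pauli d n 0 (fst (actl gs (a, b))) (snd (actl gs (a, b)))) =
        scal c' (mmult d n (pauli d n 0 (fst (act g (fst (actl gs (a, b)), snd (actl gs (a, b)))))
            (snd (act g (fst (actl gs (a, b)), snd (actl gs (a, b)))))) ?G)"
      using gate_tw[OF d od vg] by blast
    have "mmult d n (mmult d n ?G ?U) (pauli d n 0 a b) = mmult d n ?G (mmult d n ?U (pauli d n 0 a b))"
      by (simp add: mmult_assoc)
    also have "\<dots> = scal c (mmult d n (mmult d n ?G (pauli d n 0 (fst (actl gs (a, b))) (snd (actl gs (a, b))))) ?U)"
      by (simp add: c scal_right mmult_assoc)
    also have "\<dots> = scal (c * c') (mmult d n (pauli d n 0 (fst (actl (g # gs) (a, b))) (snd (actl (g # gs) (a, b)))) (mmult d n ?G ?U))"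
      by (simp add: c' scal_left scal_scal mmult_assoc)
    finally show "\<exists>c. mmult d n (cof d n (g # gs)) (pauli d n 0 a b) =
        scal c (mmult d n (pauli d n 0 (fst (actl (g # gs) (a, b))) (snd (actl (g # gs) (a, b)))) (cof d n (g # gs)))"
      by auto
  qed
qed

lemma actl_append: "actl (xs @ ys) v = actl xs (actl ys v)"
  by (induction xs) auto

lemma act_cxpow: "k \<noteq> 0 \<Longrightarrow> actl (replicate m (GC 0 k)) (a, b) = (a(0 := a 0 - int m * a k), b(k := b k + int m * b 0))"
  by (induction m) (auto simp: fun_eq_iff algebra_simps)

lemma act_spow: "actl (replicate m (GS 0)) (a, b) = (a(0 := a 0 + int m * b 0), b)"
  by (induction m) (auto simp: fun_eq_iff algebra_simps)

lemma act_f3: "actl [GF k, GF k, GF k] (a, b) = (a(k := - b k), b(k := a k))"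
  by (auto simp: fun_eq_iff)

definition block :: "nat \<Rightarrow> nat \<Rightarrow> nat \<Rightarrow> gd list" where
  "block k p q = replicate q (GC 0 k) @ [GF k] @ replicate p (GC 0 k) @ [GF k, GF k, GF k]"

lemma act_block: "k \<noteq> 0 \<Longrightarrow> actl (block k p q) (a, b) =
  (a(0 := a 0 + int p * b k - int q * (a k + int p * b 0), k := a k + int p * b 0), b(k := b k + int q * b 0))"
  by (simp add: block_def actl_append act_cxpow act_f3 fun_eq_iff algebra_simps)

fun blocks :: "(nat \<Rightarrow> nat) \<Rightarrow> (nat \<Rightarrow> nat) \<Rightarrow> nat \<Rightarrow> gd list" where
  "blocks p q 0 = []"
| "blocks p q (Suc m) = (if m = 0 then [] else block m (p m) (q m)) @ blocks p q m"

lemma act_blocks: "actl (blocks p q m) (a, b) =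
  (\<lambda>l. if l = 0 then a 0 + (\<Sum>j\<in>{1..<m}. int (p j) * b j - int (q j) * (a j + int (p j) * b 0))
       else if l < m then a l + int (p l) * b 0 else a l,
   \<lambda>l. if 0 < l \<and> l < m then b l + int (q l) * b 0 else b l)"
proof (induction m)
  case 0
  then show ?case by (auto simp: fun_eq_iff)
next
  case (Suc m)
  show ?case
  proof (cases "m = 0")
    case True
    then show ?thesis by (auto simp: fun_eq_iff)
  next
    case False
    have sm: "(\<Sum>j\<in>{1..<Suc m}. f j) = (\<Sum>j\<in>{1..<m}. f j) + f m" for f :: "nat \<Rightarrow> int"
      using False by (simp add: sum.atLeastLessThan_Suc)
    have "actl (blocks p q (Suc m)) (a, b) = actl (block m (p m) (q m)) (actl (blocks p q m) (a, b))"
      using False by (simp add: actl_append)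
    also have "\<dots> = actl (block m (p m) (q m)) (\<lambda>l. if l = 0 then a 0 + (\<Sum>j\<in>{1..<m}. int (p j) * b j - int (q j) * (a j + int (p j) * b 0))
       else if l < m then a l + int (p l) * b 0 else a l,
       \<lambda>l. if 0 < l \<and> l < m then b l + int (q l) * b 0 else b l)"
      by (simp only: Suc.IH)
    also have "\<dots> = (\<lambda>l. if l = 0 then a 0 + (\<Sum>j\<in>{1..<Suc m}. int (p j) * b j - int (q j) * (a j + int (p j) * b 0))
       else if l < Suc m then a l + int (p l) * b 0 else a l,
       \<lambda>l. if 0 < l \<and> l < Suc m then b l + int (q l) * b 0 else b l)"
      by (simp only: act_block[OF False]) (auto simp: fun_eq_iff sm algebra_simps False)
    finally show ?thesis .
  qed
qed

definition shp :: "nat \<Rightarrow> int \<Rightarrow> (nat \<Rightarrow> int) \<Rightarrow> int \<Rightarrow> (nat \<Rightarrow> int) \<Rightarrow> (nat \<Rightarrow> int) \<times> (nat \<Rightarrow> int)" where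
  "shp n A0 \<alpha> B0 \<beta> = (\<lambda>l. if l = 0 then A0 else if l < n then \<alpha> l else 0, \<lambda>l. if l = 0 then B0 else if l < n then \<beta> l else 0)"

lemma blocks_shp: "actl (blocks p q n) (shp n A0 \<alpha> B0 \<beta>) =
  shp n (A0 + (\<Sum>j\<in>{1..<n}. int (p j) * \<beta> j - int (q j) * (\<alpha> j + int (p j) * B0))) (\<lambda>l. \<alpha> l + int (p l) * B0) B0 (\<lambda>l. \<beta> l + int (q l) * B0)"
proof -
  have "(\<Sum>j\<in>{1..<n}. int (p j) * (if j = 0 then B0 else if j < n then \<beta> j else 0) -
          int (q j) * ((if j = 0 then A0 else if j < n then \<alpha> j else 0) + int (p j) * B0))
      = (\<Sum>j\<in>{1..<n}. int (p j) * \<beta> j - int (q j) * (\<alpha> j + int (p j) * B0))"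
    by (intro sum.cong) auto
  then show ?thesis unfolding shp_def act_blocks by (auto simp: fun_eq_iff)
qed

lemma spow_shp: "actl (replicate m (GS 0)) (shp n A0 \<alpha> B0 \<beta>) = shp n (A0 + int m * B0) \<alpha> B0 \<beta>"
  unfolding shp_def act_spow by (auto simp: fun_eq_iff)

lemma f3_shp: "actl [GF 0, GF 0, GF 0] (shp n A0 \<alpha> B0 \<beta>) = shp n (- B0) \<alpha> A0 \<beta>"
  unfolding shp_def act_f3 by (auto simp: fun_eq_iff)

lemma f1_shp: "actl [GF 0] (shp n A0 \<alpha> B0 \<beta>) = shp n B0 \<alpha> (- A0) \<beta>"
  unfolding shp_def by (auto simp: fun_eq_iff)

lemma blocks_valid: "m \<le> n \<Longrightarrow> g \<in> set (blocks p q m) \<Longrightarrow> gvalid n g"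
  by (induction m) (auto simp: block_def split: if_splits)

lemma shp_X: "n > 0 \<Longrightarrow> ((\<lambda>_. 0), unitv 0) = shp n 0 (\<lambda>_. 0) 1 (\<lambda>_. 0)"
  by (auto simp: shp_def unitv_def fun_eq_iff)
lemma shp_Z: "n > 0 \<Longrightarrow> (unitv 0, (\<lambda>_. 0)) = shp n 1 (\<lambda>_. 0) 0 (\<lambda>_. 0)"
  by (auto simp: shp_def unitv_def fun_eq_iff)

lemma conj_formula:
  assumes tw: "mmult d n U P = scal c (mmult d n P' U)" and UV: "mmult d n U V = ident d n"
    and P': "restr d n P' = P'"
  shows "mmult d n (mmult d n U P) V = scal c P'"
proof -
  have "mmult d n (mmult d n U P) V = scal c (mmult d n (mmult d n P' U) V)" by (simp add: tw scal_left)
  also have "\<dots> = scal c P'" by (simp add: mmult_assoc UV ident_right P')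
  finally show ?thesis .
qed

theorem lemma10:
  fixes d n :: nat
    and kX kZ :: "nat \<Rightarrow> int"
    and aX bX aZ bZ :: "nat \<Rightarrow> nat \<Rightarrow> int"
  assumes "prime d" and "odd d" and "n \<ge> 2"
    and "\<forall>i<n. \<forall>j<n.
           sform d n (aX i) (bX i) (aX j) (bX j) = sform d n (\<lambda>_. 0) (unitv i) (\<lambda>_. 0) (unitv j) \<and>
           sform d n (aX i) (bX i) (aZ j) (bZ j) = sform d n (\<lambda>_. 0) (unitv i) (unitv j) (\<lambda>_. 0) \<and>
           sform d n (aZ i) (bZ i) (aX j) (bX j) = sform d n (unitv i) (\<lambda>_. 0) (\<lambda>_. 0) (unitv j) \<and>
           sform d n (aZ i) (bZ i) (aZ j) (bZ j) = sform d n (unitv i) (\<lambda>_. 0) (unitv j) (\<lambda>_. 0)"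
    and "aX 0 0 mod int d = 0" and "bX 0 0 mod int d = 1"
    and "aZ 0 0 mod int d = 1" and "bZ 0 0 mod int d = 0"
  shows "\<exists>U V (c1::complex) (c2::complex). circuit d n U \<and>
           mmult d n U V = ident d n \<and> mmult d n V U = ident d n \<and>
           mmult d n (mmult d n U (pauli d n 0 (\<lambda>_. 0) (unitv 0))) V
             = scal c1 (pauli d n (kX 0) (aX 0) (bX 0)) \<and>
           mmult d n (mmult d n U (pauli d n 0 (unitv 0) (\<lambda>_. 0))) V
             = scal c2 (pauli d n (kZ 0) (aZ 0) (bZ 0))"
proof -
  have d1: "d > 1" using assms(1) prime_gt_1_nat by blast
  then have d: "d > 0" by simp
  have od: "odd d" using assms(2) .
  have n0: "n > 0" using assms(3) by simp
  define pA where "pA j = nat (aX 0 j mod int d)" for j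
  define qA where "qA j = nat (bX 0 j mod int d)" for j
  define pB where "pB j = nat (aZ 0 j mod int d)" for j
  define qB where "qB j = nat (bZ 0 j mod int d)" for j
  define m1 where "m1 = (\<Sum>j\<in>{1..<n}. pA j * qA j)"
  define m2 where "m2 = (\<Sum>j\<in>{1..<n}. pB j * qB j)"
  define T where "T = (\<Sum>j\<in>{1..<n}. int (pB j) * int (qA j) - int (qB j) * int (pA j))"
  define L where "L = [GF 0] @ replicate m2 (GS 0) @ blocks pB qB n @ [GF 0, GF 0, GF 0] @ replicate m1 (GS 0) @ blocks pA qA n"
  have actL: "actl L v = actl [GF 0] (actl (replicate m2 (GS 0)) (actl (blocks pB qB n) (actl [GF 0, GF 0, GF 0]
       (actl (replicate m1 (GS 0)) (actl (blocks pA qA n) v)))))" for v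
    unfolding L_def by (simp only: actl_append)
  have val: "\<forall>g\<in>set L. gvalid n g"
    unfolding L_def using blocks_valid[of n n] n0 by auto
  have CH: "circuit d n (cof d n L) \<and>
    (\<exists>V. mmult d n (cof d n L) V = ident d n \<and> mmult d n V (cof d n L) = ident d n) \<and>
    (\<forall>a b. \<exists>c. mmult d n (cof d n L) (pauli d n 0 a b) =
        scal c (mmult d n (pauli d n 0 (fst (actl L (a, b))) (snd (actl L (a, b)))) (cof d n L)))"
    by (rule chain[OF d od val])
  obtain V where V1: "mmult d n (cof d n L) V = ident d n" and V2: "mmult d n V (cof d n L) = ident d n"
    using CH by blast

  have sA: "(\<Sum>j\<in>{1..<n}. int (pA j) * 0 - int (qA j) * (0 + int (pA j) * 1)) = - int m1"
    by (simp add: m1_def of_nat_sum sum_negf mult.commute)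
  have sB: "(\<Sum>j\<in>{1..<n}. int (pB j) * 0 - int (qB j) * (0 + int (pB j) * 1)) = - int m2"
    by (simp add: m2_def of_nat_sum sum_negf mult.commute)
  have sB': "(\<Sum>j\<in>{Suc 0..<n}. - (int (qB j) * int (pB j))) = - int m2"
    by (simp add: m2_def of_nat_sum sum_negf mult.commute)
  have sX: "(\<Sum>j\<in>{1..<n}. int (pB j) * (0 + int (qA j) * 1) - int (qB j) * ((0 + int (pA j) * 1) + int (pB j) * 0)) = T"
    by (simp add: T_def)
  have sZ: "(\<Sum>j\<in>{1..<n}. int (pA j) * 0 - int (qA j) * (0 + int (pA j) * 0)) = 0"
    by simp

  have LX: "actl L ((\<lambda>_. 0), unitv 0) = shp n 0 (\<lambda>l. int (pA l)) (1 - T) (\<lambda>l. int (qA l))"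
  proof -
    have "actl L ((\<lambda>_. 0), unitv 0) = actl L (shp n 0 (\<lambda>_. 0) 1 (\<lambda>_. 0))" using shp_X[OF n0] by simp
    also have "\<dots> = shp n 0 (\<lambda>l. int (pA l)) (1 - T) (\<lambda>l. int (qA l))"
      unfolding actL blocks_shp spow_shp f3_shp f1_shp sA
      by (simp only: sX[symmetric]) simp
    finally show ?thesis .
  qed
  have LZ: "actl L (unitv 0, (\<lambda>_. 0)) = shp n 1 (\<lambda>l. int (pB l)) 0 (\<lambda>l. int (qB l))"
  proof -
    have "actl L (unitv 0, (\<lambda>_. 0)) = actl L (shp n 1 (\<lambda>_. 0) 0 (\<lambda>_. 0))" using shp_Z[OF n0] by simp
    also have "\<dots> = shp n 1 (\<lambda>l. int (pB l)) 0 (\<lambda>l. int (qB l))"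
      unfolding actL blocks_shp spow_shp f3_shp f1_shp
      by (simp, simp only: sB', simp)
    finally show ?thesis .
  qed
  have natmod: "int (nat (v mod int d)) = v mod int d" for v using d by simp
  have hs: "sform d n (aX 0) (bX 0) (aZ 0) (bZ 0) = sform d n (\<lambda>_. 0) (unitv 0) (unitv 0) (\<lambda>_. 0)"
    using assms(4) n0 by blast
  have rhs: "sform d n (\<lambda>_. 0) (unitv 0) (unitv 0) (\<lambda>_. 0) = (-1) mod int d"
  proof -
    have "(\<Sum>i<n. (0::int) * 0 - unitv 0 i * unitv 0 i) = (\<Sum>i<n. if i = 0 then -1 else 0)"
      by (intro sum.cong) (auto simp: unitv_def)
    also have "\<dots> = -1" using n0 by (simp add: sum.delta)
    finally show ?thesis by (simp add: sform_def)
  qed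
  define A where "A = aX 0 0 * bZ 0 0 - bX 0 0 * aZ 0 0"
  define R where "R = (\<Sum>i\<in>{Suc 0..<n}. aX 0 i * bZ 0 i - bX 0 i * aZ 0 i)"
  have lhs: "sform d n (aX 0) (bX 0) (aZ 0) (bZ 0) = (A + R) mod int d"
  proof -
    have "(\<Sum>i<n. aX 0 i * bZ 0 i - bX 0 i * aZ 0 i) = A + R"
      unfolding A_def R_def using n0 by (simp add: lessThan_atLeast0 sum.atLeast_Suc_lessThan)
    then show ?thesis by (simp add: sform_def)
  qed
  have Amod: "A mod int d = (-1) mod int d"
  proof -
    have "A mod int d = ((aX 0 0 * bZ 0 0) mod int d - (bX 0 0 * aZ 0 0) mod int d) mod int d"
      unfolding A_def by (simp add: mod_diff_eq)
    also have "(aX 0 0 * bZ 0 0) mod int d = ((aX 0 0 mod int d) * (bZ 0 0 mod int d)) mod int d"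
      by (simp add: mod_mult_eq)
    also have "(bX 0 0 * aZ 0 0) mod int d = ((bX 0 0 mod int d) * (aZ 0 0 mod int d)) mod int d"
      by (simp add: mod_mult_eq)
    finally show ?thesis using assms(5-8) d1 by simp
  qed
  have "(A + R) mod int d = (-1) mod int d" using hs lhs rhs by simp
  then have "((A mod int d) + R) mod int d = (-1) mod int d" by (simp add: mod_add_left_eq)
  then have "(-1 + R) mod int d = (-1) mod int d" unfolding Amod by (simp add: mod_add_left_eq)
  then have dR: "int d dvd R" by (simp add: mod_eq_dvd_iff)
  have negT: "- T = (\<Sum>j\<in>{Suc 0..<n}. int (pA j) * int (qB j) - int (qA j) * int (pB j))"
    unfolding T_def sum_negf[symmetric] by (intro sum.cong) auto
  have RT: "R mod int d = (- T) mod int d"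
  proof -
    have H: "(aX 0 i * bZ 0 i - bX 0 i * aZ 0 i) mod int d = (int (pA i) * int (qB i) - int (qA i) * int (pB i)) mod int d" for i
    proof (rule mod_diff_cong)
      show "aX 0 i * bZ 0 i mod int d = int (pA i) * int (qB i) mod int d"
        by (rule mod_mult_cong) (use d in \<open>simp_all add: pA_def qB_def natmod\<close>)
      show "bX 0 i * aZ 0 i mod int d = int (qA i) * int (pB i) mod int d"
        by (rule mod_mult_cong) (use d in \<open>simp_all add: qA_def pB_def natmod\<close>)
    qed
    have "R mod int d = (\<Sum>i\<in>{Suc 0..<n}. (aX 0 i * bZ 0 i - bX 0 i * aZ 0 i) mod int d) mod int d"
      unfolding R_def by (simp only: mod_sum_eq)
    also have "(\<Sum>i\<in>{Suc 0..<n}. (aX 0 i * bZ 0 i - bX 0 i * aZ 0 i) mod int d) = (\<Sum>i\<in>{Suc 0..<n}. (int (pA i) * int (qB i) - int (qA i) * int (pB i)) mod int d)"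
      by (rule sum.cong[OF refl H])
    also have "(\<Sum>i\<in>{Suc 0..<n}. (int (pA i) * int (qB i) - int (qA i) * int (pB i)) mod int d) mod int d = (- T) mod int d"
      unfolding negT by (simp only: mod_sum_eq)
    finally show ?thesis .
  qed
  have dT: "int d dvd T"
  proof -
    have "R mod int d = 0" using dR by simp
    then have "(- T) mod int d = 0" using RT by simp
    then show ?thesis by (simp add: mod_eq_0_iff_dvd)
  qed
  have oneT: "(1 - T) mod int d = 1"
  proof -
    have "(1 - T) mod int d = (1 - T mod int d) mod int d" by (simp add: mod_diff_right_eq)
    also have "\<dots> = 1" using dT d1 by simp
    finally show ?thesis .
  qed
  have PX: "pauli d n 0 (fst (actl L ((\<lambda>_. 0), unitv 0))) (snd (actl L ((\<lambda>_. 0), unitv 0))) = pauli d n 0 (aX 0) (bX 0)"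
    unfolding LX
  proof (rule pauli_cong[OF d])
    show "\<forall>i<n. fst (shp n 0 (\<lambda>l. int (pA l)) (1 - T) (\<lambda>l. int (qA l))) i mod int d = aX 0 i mod int d"
      using assms(5) d by (auto simp: shp_def pA_def natmod)
    show "\<forall>i<n. snd (shp n 0 (\<lambda>l. int (pA l)) (1 - T) (\<lambda>l. int (qA l))) i mod int d = bX 0 i mod int d"
      using assms(6) oneT d by (auto simp: shp_def qA_def natmod)
  qed
  have PZ: "pauli d n 0 (fst (actl L (unitv 0, (\<lambda>_. 0)))) (snd (actl L (unitv 0, (\<lambda>_. 0)))) = pauli d n 0 (aZ 0) (bZ 0)"
    unfolding LZ
  proof (rule pauli_cong[OF d])
    show "\<forall>i<n. fst (shp n 1 (\<lambda>l. int (pB l)) 0 (\<lambda>l. int (qB l))) i mod int d = aZ 0 i mod int d"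
      using assms(7) d1 d by (auto simp: shp_def pB_def natmod)
    show "\<forall>i<n. snd (shp n 1 (\<lambda>l. int (pB l)) 0 (\<lambda>l. int (qB l))) i mod int d = bZ 0 i mod int d"
      using assms(8) d by (auto simp: shp_def qB_def natmod)
  qed
  obtain cx where cx: "mmult d n (cof d n L) (pauli d n 0 (\<lambda>_. 0) (unitv 0)) =
      scal cx (mmult d n (pauli d n 0 (fst (actl L ((\<lambda>_. 0), unitv 0))) (snd (actl L ((\<lambda>_. 0), unitv 0)))) (cof d n L))"
    using CH by blast
  obtain cz where cz: "mmult d n (cof d n L) (pauli d n 0 (unitv 0) (\<lambda>_. 0)) =
      scal cz (mmult d n (pauli d n 0 (fst (actl L (unitv 0, (\<lambda>_. 0)))) (snd (actl L (unitv 0, (\<lambda>_. 0))))) (cof d n L))"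
    using CH by blast
  have FX: "mmult d n (mmult d n (cof d n L) (pauli d n 0 (\<lambda>_. 0) (unitv 0))) V
      = scal (cx * wpow d (0 - kX 0)) (pauli d n (kX 0) (aX 0) (bX 0))"
  proof -
    have "mmult d n (mmult d n (cof d n L) (pauli d n 0 (\<lambda>_. 0) (unitv 0))) V = scal cx (pauli d n 0 (aX 0) (bX 0))"
      using conj_formula[OF cx V1 restr_pauli] unfolding PX .
    also have "\<dots> = scal (cx * wpow d (0 - kX 0)) (pauli d n (kX 0) (aX 0) (bX 0))"
      by (subst pauli_phase[of d n 0 _ _ "kX 0"]) (simp add: scal_scal)
    finally show ?thesis .
  qed
  have FZ: "mmult d n (mmult d n (cof d n L) (pauli d n 0 (unitv 0) (\<lambda>_. 0))) V
      = scal (cz * wpow d (0 - kZ 0)) (pauli d n (kZ 0) (aZ 0) (bZ 0))"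
  proof -
    have "mmult d n (mmult d n (cof d n L) (pauli d n 0 (unitv 0) (\<lambda>_. 0))) V = scal cz (pauli d n 0 (aZ 0) (bZ 0))"
      using conj_formula[OF cz V1 restr_pauli] unfolding PZ .
    also have "\<dots> = scal (cz * wpow d (0 - kZ 0)) (pauli d n (kZ 0) (aZ 0) (bZ 0))"
      by (subst pauli_phase[of d n 0 _ _ "kZ 0"]) (simp add: scal_scal)
    finally show ?thesis .
  qed
  show ?thesis using CH V1 V2 FX FZ by blast
qed

end
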